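(* Let $g(\alpha,\beta,\gamma)=\gamma^{3/2}+\min\big(0.465,\frac{3\alpha\beta}{\alpha+\beta},3\alpha\sqrt\beta\big)$, where $\frac{\alpha\beta}{\alpha+\beta}:=0$ if $(\alpha,\beta)=(0,0)$, and $f(\alpha,\beta,\gamma,\delta)=\min\big(2\delta^{3/2}+g(\alpha,\beta,\gamma),\tfrac14+\tfrac34g(\alpha,\beta,\gamma)\big)$. If $\alpha,\beta,\gamma,\delta$ are nonnegative real numbers with $2\alpha+\beta+\gamma+2\delta=1$ and $\gamma\le\alpha$, then $f(\alpha,\beta,\gamma,\delta)\le\frac12$, with equality if and only if $(\alpha,\beta,\gamma,\delta)=(\frac14,\frac14,\frac14,0)$. *)

theory Defs
  imports Complex_Main
begin

definition hm :: "real \<Rightarrow> real \<Rightarrow> real" where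
  "hm a b = (if a = 0 \<and> b = 0 then 0 else a * b / (a + b))"

definition g :: "real \<Rightarrow> real \<Rightarrow> real \<Rightarrow> real" where
  "g a b c = c powr (3/2) + min 0.465 (min (3 * hm a b) (3 * a * sqrt b))"

definition f :: "real \<Rightarrow> real \<Rightarrow> real \<Rightarrow> real \<Rightarrow> real" where
  "f a b c d = min (2 * d powr (3/2) + g a b c) (1/4 + 3/4 * g a b c)"

end

theory Submission
  imports Defs
begin

lemma powr32: "x \<ge> 0 \<Longrightarrow> x powr (3/2) = x * sqrt x" for x::real
proof (cases "x = 0")
  case False
  assume "x \<ge> 0" then have "x > 0" using False by auto
  have "x powr (3/2) = x powr (1 + 1/2)" by simp
  also have "\<dots> = x powr 1 * x powr (1/2)" by (rule powr_add)
  also have "\<dots> = x * sqrt x" using \<open>x>0\<close> by (simp add: powr_half_sqrt)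
  finally show ?thesis .
qed simp

lemma sqrt_ub: "0 \<le> q \<Longrightarrow> x \<le> q^2 \<Longrightarrow> sqrt x \<le> q"
  by (metis abs_of_nonneg real_sqrt_abs real_sqrt_le_mono)

lemma F_ub: "0 \<le> x \<Longrightarrow> 0 \<le> q \<Longrightarrow> x \<le> q^2 \<Longrightarrow> x * sqrt x \<le> x * q"
  by (intro mult_left_mono sqrt_ub) auto

lemma F_mono: "0 \<le> x \<Longrightarrow> x \<le> y \<Longrightarrow> x * sqrt x \<le> y * sqrt y"
  by (intro mult_mono real_sqrt_le_mono) auto

lemma F_nn: "0 \<le> x \<Longrightarrow> 0 \<le> x * sqrt x" by simp

lemma chord:
  fixes x1 x x2 :: real
  assumes "0 \<le> x1" "x1 \<le> x" "x \<le> x2"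
  shows "(x2 - x1) * (x * sqrt x) \<le> (x2 - x) * (x1 * sqrt x1) + (x - x1) * (x2 * sqrt x2)"
proof -
  define L where "L = sqrt x1"
  define X where "X = sqrt x"
  define R where "R = sqrt x2"
  have LX: "L \<le> X" and XR: "X \<le> R" using assms by (simp_all add: L_def X_def R_def)
  have L0: "0 \<le> L" using assms by (simp add: L_def)
  have e1: "x1 = L^2" and e2: "x = X^2" and e3: "x2 = R^2" using assms by (simp_all add: L_def X_def R_def)
  have "(x2 - x) * (x1 * sqrt x1) + (x - x1) * (x2 * sqrt x2) - (x2 - x1) * (x * sqrt x)
        = (R-L)*(X-L)*(R-X)*((R+L)*X+L*R)"
    unfolding L_def[symmetric] X_def[symmetric] R_def[symmetric] e1 e2 e3
    using L0 LX XR by (simp add: power2_eq_square algebra_simps)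
  moreover have "0 \<le> (R-L)*(X-L)*(R-X)*((R+L)*X+L*R)"
    using LX XR L0 by (intro mult_nonneg_nonneg add_nonneg_nonneg) auto
  ultimately show ?thesis by linarith
qed

lemma chord_ub:
  fixes x1 x x2 y1 y2 :: real
  assumes "0 \<le> x1" "x1 \<le> x" "x \<le> x2" "x1 < x2" "x1 * sqrt x1 \<le> y1" "x2 * sqrt x2 \<le> y2"
  shows "(x2 - x1) * (x * sqrt x) \<le> (x2 - x) * y1 + (x - x1) * y2"
proof -
  have "(x2 - x) * (x1 * sqrt x1) \<le> (x2 - x) * y1" using assms by (intro mult_left_mono) auto
  moreover have "(x - x1) * (x2 * sqrt x2) \<le> (x - x1) * y2" using assms by (intro mult_left_mono) auto
  ultimately show ?thesis using chord[OF assms(1-3)] by linarith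
qed

definition H :: "real \<Rightarrow> real \<Rightarrow> real" where
  "H a b = min 0.465 (min (3 * hm a b) (3 * a * sqrt b))"

lemma g_H: "c \<ge> 0 \<Longrightarrow> g a b c = c * sqrt c + H a b"
  by (simp add: g_def H_def powr32)

lemma hm_pos: "a \<ge> 0 \<Longrightarrow> b \<ge> 0 \<Longrightarrow> a + b > 0 \<Longrightarrow> hm a b = a * b / (a + b)"
  by (auto simp: hm_def)

lemma H_cap: "H a b \<le> 93/200" by (simp add: H_def)
lemma H_hm: "H a b \<le> 3 * hm a b" by (simp add: H_def)
lemma H_A: "H a b \<le> 3 * a * sqrt b" by (simp add: H_def)

lemma hm_bound:
  assumes "a \<ge> 0" "b \<ge> 0"
  shows "3 * hm a b \<le> 1287/2500 * (2*a+b)"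
proof (cases "a + b = 0")
  case True
  then have "a = 0" "b = 0" using assms by auto
  then show ?thesis by (simp add: hm_def)
next
  case False
  then have pos: "a + b > 0" using assms by auto
  have q: "3 * (a*b) \<le> 1287/2500 * (2*a+b) * (a+b)"
  proof -
    have "0 \<le> 858*(a - 1213/1716*b)^2 + (429 - 1213^2/3432)*b^2"
      by (intro add_nonneg_nonneg) (auto simp: power2_eq_square)
    then show ?thesis by (simp add: power2_eq_square algebra_simps)
  qed
  have "3 * hm a b = 3 * (a*b) / (a+b)" using hm_pos[OF assms pos] by simp
  also have "\<dots> \<le> 1287/2500 * (2*a+b)" using q pos by (simp add: divide_le_eq)
  finally show ?thesis .
qed

lemma amgm3:
  assumes "a \<ge> 0" "b \<ge> 0"
  shows "a * sqrt b \<le> ((2*a+b)/3) * sqrt ((2*a+b)/3)"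
proof -
  have "a^2 * b \<le> ((2*a+b)/3)^3"
  proof -
    have "0 \<le> (a-b)^2*(8*a+b)" using assms by simp
    moreover have "(2*a+b)^3 - 27*(a^2*b) = (a-b)^2*(8*a+b)" by (simp add: power2_eq_square power3_eq_cube algebra_simps)
    ultimately have "27*(a^2*b) \<le> (2*a+b)^3" by linarith
    moreover have "((2*a+b)/3)^3 = (2*a+b)^3/27" by (simp add: power_divide)
    ultimately show ?thesis by simp
  qed
  then have "sqrt (a^2 * b) \<le> sqrt (((2*a+b)/3)^3)" by (rule real_sqrt_le_mono)
  moreover have "sqrt (a^2 * b) = a * sqrt b" using assms by (simp add: real_sqrt_mult)
  moreover have "sqrt (((2*a+b)/3)^3) = ((2*a+b)/3) * sqrt ((2*a+b)/3)"
  proof -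
    define s where "s = (2*a+b)/3"
    have s0: "s \<ge> 0" using assms by (simp add: s_def)
    have "s^3 = s^2 * s" by (simp add: power3_eq_cube power2_eq_square)
    then have "sqrt (s^3) = sqrt (s^2) * sqrt s" by (simp add: real_sqrt_mult)
    then show ?thesis using s0 by (simp add: s_def[symmetric])
  qed
  ultimately show ?thesis by simp
qed

lemma psi_mono:
  fixes a0 a K :: real
  assumes "0 \<le> a0" "a0 \<le> a" "a < K" "K^2 - 2*K*(a0+a) + 2*a0*a \<le> 0"
  shows "a*(K-2*a)/(K-a) \<le> a0*(K-2*a0)/(K-a0)"
proof -
  have p1: "K - a > 0" "K - a0 > 0" using assms by auto
  have "a0*(K-2*a0)/(K-a0) - a*(K-2*a)/(K-a) = (a0-a)*(K^2 - 2*K*(a0+a) + 2*a0*a)/((K-a0)*(K-a))"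
    using p1 by (simp add: field_simps) (simp add: power2_eq_square algebra_simps)
  moreover have "0 \<le> (a0-a)*(K^2 - 2*K*(a0+a) + 2*a0*a)/((K-a0)*(K-a))"
    using assms p1 by (intro divide_nonneg_pos mult_nonpos_nonpos mult_pos_pos) auto
  ultimately show ?thesis by linarith
qed

lemma psi_mono_strict:
  fixes a0 a K :: real
  assumes "0 \<le> a0" "a0 < a" "a < K" "K^2 - 2*K*(a0+a) + 2*a0*a < 0"
  shows "a*(K-2*a)/(K-a) < a0*(K-2*a0)/(K-a0)"
proof -
  have p1: "K - a > 0" "K - a0 > 0" using assms by auto
  have "a0*(K-2*a0)/(K-a0) - a*(K-2*a)/(K-a) = (a0-a)*(K^2 - 2*K*(a0+a) + 2*a0*a)/((K-a0)*(K-a))"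
    using p1 by (simp add: field_simps) (simp add: power2_eq_square algebra_simps)
  moreover have "0 < (a0-a)*(K^2 - 2*K*(a0+a) + 2*a0*a)/((K-a0)*(K-a))"
    using assms p1 by (intro divide_pos_pos mult_neg_neg mult_pos_pos) auto
  ultimately show ?thesis by linarith
qed

lemma A_mono:
  fixes a0 a K :: real
  assumes "0 \<le> a" "a \<le> a0" "3*a0 \<le> K"
  shows "a * sqrt (K - 2*a) \<le> a0 * sqrt (K - 2*a0)"
proof -
  have k1: "K - 2*a \<ge> 0" "K - 2*a0 \<ge> 0" using assms by auto
  have "a^2*(K-2*a) \<le> a0^2*(K-2*a0)"
  proof -
    have "a0^2*(K-2*a0) - a^2*(K-2*a) = (a0-a)*(K*(a0+a) - 2*(a0^2+a0*a+a^2))"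
      by (simp add: power2_eq_square algebra_simps)
    moreover have "0 \<le> (a0-a)*(K*(a0+a) - 2*(a0^2+a0*a+a^2))"
    proof (intro mult_nonneg_nonneg)
      have "K*(a0+a) \<ge> 3*a0*(a0+a)" using assms by (intro mult_right_mono) auto
      moreover have "a0*a \<ge> a*a" "a0*a0 \<ge> a0*a" using assms by (auto intro: mult_right_mono mult_left_mono)
      ultimately show "0 \<le> K*(a0+a) - 2*(a0^2+a0*a+a^2)" by (simp add: power2_eq_square algebra_simps)
    qed (use assms in auto)
    ultimately show ?thesis by linarith
  qed
  then have "sqrt (a^2*(K-2*a)) \<le> sqrt (a0^2*(K-2*a0))" by (rule real_sqrt_le_mono)
  then show ?thesis using assms k1 by (simp add: real_sqrt_mult)
qed

lemma H_le_psi: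
  assumes "a \<ge> 0" "b \<ge> 0" "a + b > 0" "K = 2*a + b"
  shows "H a b \<le> 3 * (a*(K-2*a)/(K-a))"
proof -
  have "hm a b = a*(K-2*a)/(K-a)" using hm_pos[OF assms(1-3)] assms(4) by (simp add: algebra_simps)
  then show ?thesis using H_hm[of a b] by simp
qed

lemma E4:
  assumes a0: "a \<ge> 0" and b0: "b \<ge> 0" and c0: "c \<ge> 0" and ca: "c \<le> a" and s: "2*a+b+c = 1"
  shows "c*sqrt c + H a b \<le> 1/2 \<and> ((a = 1/4 \<and> b = 1/4 \<and> c = 1/4) \<or> c*sqrt c + H a b < 1/2)"
proof -
  define r where "r = sqrt c"
  have r0: "r \<ge> 0" using c0 by (simp add: r_def)
  have cr: "c = r^2" using c0 by (simp add: r_def)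
  have Fc: "c * sqrt c = r^3" using cr r_def by (simp add: power2_eq_square power3_eq_cube)
  define K where "K = 1 - c"
  have K: "K = 2*a + b" using s by (simp add: K_def)
  show ?thesis
  proof (cases "c > 1/4")
    case True
    have rh: "r > 1/2"
    proof (rule ccontr)
      assume "\<not> r > 1/2"
      then have "r^2 \<le> (1/2)^2" using r0 by (intro power_mono) auto
      then show False using True cr by (simp add: power2_eq_square)
    qed
    have c3: "c \<le> 1/3" using ca s b0 by linarith
    have apos: "a + b > 0" using True ca b0 by linarith
    have aK: "a < K" using K apos ca True by linarith
    have B0: "K^2 - 4*K*c + 2*c^2 \<le> 0"
    proof -
      have "K^2 - 4*K*c + 2*c^2 = 7*((c-1/4)*(c-1/3)) + (5/12 - 23/12*c)"
        by (simp add: K_def power2_eq_square algebra_simps)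
      moreover have "(c-1/4)*(c-1/3) \<le> 0" using True c3 by (intro mult_nonneg_nonpos) auto
      ultimately show ?thesis using True by linarith
    qed
    have br: "K^2 - 2*K*(c+a) + 2*c*a \<le> 0"
    proof -
      have "K^2 - 2*K*(c+a) + 2*c*a = (K^2 - 4*K*c + 2*c^2) - 2*((a-c)*(K-c))"
        by (simp add: power2_eq_square algebra_simps)
      moreover have "(a-c)*(K-c) \<ge> 0" using ca aK by (intro mult_nonneg_nonneg) auto
      ultimately show ?thesis using B0 by linarith
    qed
    have "H a b \<le> 3 * (a*(K-2*a)/(K-a))" using H_le_psi[OF a0 b0 apos K] .
    also have "\<dots> \<le> 3 * (c*(K-2*c)/(K-c))" using psi_mono[OF c0 ca aK br] by simp
    finally have Hb: "H a b \<le> 3 * (c*(K-2*c)/(K-c))" .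
    have den: "1 - 2*r^2 > 0" using c3 cr by simp
    have Q: "(r^3 - 1/2)*(1-2*r^2) + 3*r^2*(1-3*r^2) < 0"
    proof -
      have "(r^3 - 1/2)*(1-2*r^2) + 3*r^2*(1-3*r^2) = (r - 1/2) * (-2*r^4 - 10*r^3 - 4*r^2 + 2*r + 1)"
        by (simp add: power2_eq_square power3_eq_cube power4_eq_xxxx algebra_simps)
      moreover have "-2*r^4 - 10*r^3 - 4*r^2 + 2*r + 1 < 0"
      proof -
        have "r^3 > 1/8" using power_strict_mono[of "1/2" r 3] rh r0 by (simp add: power3_eq_cube)
        moreover have "r^2 * 2 > r" using rh r0 by (simp add: power2_eq_square)
        moreover have "r^4 \<ge> 0" by simp
        ultimately show ?thesis by linarith
      qed
      moreover have "r - 1/2 > 0" using rh by simp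
      ultimately show ?thesis by (simp add: mult_pos_neg)
    qed
    have "3 * (c*(K-2*c)/(K-c)) = 3*r^2*(1-3*r^2)/(1-2*r^2)"
      by (simp add: K_def cr algebra_simps)
    also have "\<dots> < 1/2 - r^3"
    proof -
      have "3*r^2*(1-3*r^2) < (1/2 - r^3)*(1-2*r^2)" using Q by (simp add: algebra_simps)
      then show ?thesis using pos_divide_less_eq[OF den] by simp
    qed
    finally have "c*sqrt c + H a b < 1/2" using Hb Fc by linarith
    then show ?thesis by simp
  next
    case False
    then have c4: "c \<le> 1/4" by simp
    have rh: "r \<le> 1/2"
    proof (rule ccontr)
      assume "\<not> r \<le> 1/2"
      then have "(1/2)^2 < r^2" using r0 by (intro power_strict_mono) auto
      then show False using c4 cr by (simp add: power2_eq_square)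
    qed
    show ?thesis
    proof (cases "r < 21/50")
      case True
      show ?thesis
      proof (cases "r \<le> 327/1000")
        case True
        have "r^3 \<le> (327/1000)^3" using True r0 by (intro power_mono) auto
        moreover have "(327/1000::real)^3 = 34965783/1000000000" by (simp add: power3_eq_cube)
        ultimately have "c*sqrt c + H a b < 1/2" using Fc H_cap[of a b] by linarith
        then show ?thesis by simp
      next
        case False
        have "H a b \<le> 1287/2500 * (2*a+b)" using H_hm[of a b] hm_bound[OF a0 b0] by linarith
        also have "\<dots> = 1287/2500 * (1 - r^2)" using s cr by simp
        finally have Hb: "H a b \<le> 1287/2500 * (1 - r^2)" .
        define l :: real where "l = 327/1000"
        define u :: real where "u = 21/50"
        have "r^3 + 1287/2500 * (1 - r^2) - 1/2 = (r-l)*(r-u)*(r+1161/5000) + (180567/5000000*r - 4272587/250000000)"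
          by (simp add: l_def u_def power2_eq_square power3_eq_cube field_simps)
        moreover have "(r-l)*(r-u)*(r+1161/5000) \<le> 0"
          using False \<open>r < 21/50\<close> r0 by (intro mult_nonpos_nonneg mult_nonneg_nonpos) (auto simp: l_def u_def)
        moreover have "180567/5000000*r - 4272587/250000000 < 0" using \<open>r < 21/50\<close> by simp
        ultimately have "r^3 + 1287/2500 * (1 - r^2) < 1/2" by linarith
        then have "c*sqrt c + H a b < 1/2" using Fc Hb by linarith
        then show ?thesis by simp
      qed
    next
      case False
      then have r42: "r \<ge> 21/50" by simp
      define a1 where "a1 = r - r^2"
      have Ka1: "K - 2*a1 = (1-r)^2" by (simp add: K_def a1_def cr power2_eq_square algebra_simps)
      have ca1: "c \<le> a1"
      proof -
        have "r * r \<le> r * (1/2)" using rh r0 by (intro mult_left_mono) auto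
        then have "r^2 \<le> r * (1/2)" by (simp add: power2_eq_square)
        then show ?thesis by (simp add: a1_def cr)
      qed
      have fin: "r^3 + 3*(r*(1-r)^2) = 1/2 + (2*r-1)^3/2"
        by (simp add: power2_eq_square power3_eq_cube field_simps)
      have neg: "(2*r-1)^3 \<le> 0" using rh by (simp add: power3_eq_cube mult_nonpos_nonneg mult_nonneg_nonpos)
      show ?thesis
      proof (cases "a \<le> a1")
        case True
        have K3: "3*a1 \<le> K"
        proof -
          have "K - 3*a1 = (1-2*r)*(1-r)" by (simp add: K_def a1_def cr power2_eq_square algebra_simps)
          moreover have "(1-2*r)*(1-r) \<ge> 0" using rh by (intro mult_nonneg_nonneg) auto
          ultimately show ?thesis by linarith
        qed
        have "H a b \<le> 3 * (a * sqrt b)" using H_A[of a b] by simp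
        also have "a * sqrt b = a * sqrt (K - 2*a)" using K by simp
        also have "\<dots> \<le> a1 * sqrt (K - 2*a1)" using A_mono[OF a0 True K3] .
        also have "\<dots> = r*(1-r)^2"
        proof -
          have sq: "sqrt (K - 2*a1) = 1 - r" unfolding Ka1 using rh by simp
          show ?thesis by (simp only: sq) (simp add: a1_def power2_eq_square algebra_simps)
        qed
        finally have Hb: "H a b \<le> 3*(r*(1-r)^2)" by simp
        have le: "c*sqrt c + H a b \<le> 1/2" using Hb Fc fin neg by linarith
        show ?thesis
        proof (cases "r = 1/2")
          case True
          then have "c = 1/4" by (simp only: cr True power2_eq_square)
          moreover have "a1 = 1/4" by (simp only: a1_def True power2_eq_square)
          ultimately have "a = 1/4" using ca \<open>a \<le> a1\<close> by linarith
          moreover have "b = 1/4" using s \<open>a = 1/4\<close> \<open>c = 1/4\<close> by linarith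
          ultimately show ?thesis using le \<open>c = 1/4\<close> by blast
        next
          case False
          then have "2*r - 1 < 0" using rh by simp
          then have "(2*r-1)^3 < 0" by (simp add: power3_eq_cube mult_neg_neg mult_pos_neg)
          then have "c*sqrt c + H a b < 1/2" using Hb Fc fin by linarith
          then show ?thesis by simp
        qed
      next
        case False
        have apos: "a + b > 0" using False ca1 c0 b0 by linarith
        have aK: "a < K" using K apos by linarith
        have a10: "0 \<le> a1" using c0 ca1 by linarith
        have psi1: "a1*(K-2*a1)/(K-a1) = r*(1-r)^2"
        proof -
          have e1: "K - a1 = 1 - r" by (simp add: K_def a1_def cr)
          have "1 - r > 0" using rh by simp
          then have "a1*(1-r)^2/(1-r) = r*(1-r)^2" by (simp add: a1_def power2_eq_square field_simps)
          then show ?thesis by (simp only: e1 Ka1)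
        qed
        have B0: "K^2 - 4*K*a1 + 2*a1^2 = (1-r)^2*(1-2*r-r^2)"
          by (simp add: K_def a1_def cr power2_eq_square algebra_simps)
        have B1: "1-2*r-r^2 < 0"
        proof -
          have "r*r \<ge> 21/50 * r" using r42 r0 by (intro mult_right_mono) auto
          then have "r^2 \<ge> 21/50 * r" by (simp add: power2_eq_square)
          then show ?thesis using r42 by linarith
        qed
        have br_eq: "K^2 - 2*K*(a1+a) + 2*a1*a = (K^2 - 4*K*a1 + 2*a1^2) - 2*((a-a1)*(K-a1))"
          by (simp add: power2_eq_square algebra_simps)
        have p2: "(a-a1)*(K-a1) > 0" using False aK by (intro mult_pos_pos) auto
        have "(1-r)^2*(1-2*r-r^2) \<le> 0" using B1 by (intro mult_nonneg_nonpos) auto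
        then have br: "K^2 - 2*K*(a1+a) + 2*a1*a < 0" using br_eq B0 p2 by linarith
        have "H a b \<le> 3 * (a*(K-2*a)/(K-a))" using H_le_psi[OF a0 b0 apos K] .
        also have "\<dots> < 3 * (a1*(K-2*a1)/(K-a1))"
          using psi_mono_strict[OF a10 _ aK br] False by simp
        finally have "H a b < 3*(r*(1-r)^2)" using psi1 by simp
        then have "c*sqrt c + H a b < 1/2" using Fc fin neg by linarith
        then show ?thesis by simp
      qed
    qed
  qed
qed

lemma E3:
  assumes a0: "a \<ge> 0" and b0: "b \<ge> 0" and d0: "d \<ge> 0" and s: "3*a+b+2*d = 1"
  shows "a*sqrt a + d + H a b \<le> 1/2"
proof (cases "a \<le> 113/500")
  case True
  have sa: "a*sqrt a \<le> a*(2377/5000)" using F_ub[OF a0, of "2377/5000"] True by (simp add: power2_eq_square)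
  have sb: "6*(a*sqrt b) \<le> 9*a^2 + b"
  proof -
    have "0 \<le> (3*a - sqrt b)^2" by simp
    moreover have "(3*a - sqrt b)^2 = 9*a^2 - 6*(a*sqrt b) + b" using b0 by (simp add: power2_eq_square algebra_simps)
    ultimately show ?thesis by linarith
  qed
  have pr: "a*(9/2*a + 2377/5000 - 3/2) \<le> 0" using True a0 by (intro mult_nonneg_nonpos) auto
  have "a*(9/2*a + 2377/5000 - 3/2) = 9/2*a^2 + a*(2377/5000) - 3/2*a" by (simp add: power2_eq_square algebra_simps)
  then show ?thesis using H_A[of a b] sa sb pr s by linarith
next
  case False
  define b' where "b' = b + 2*d"
  have b'0: "b' \<ge> 0" using b0 d0 by (simp add: b'_def)
  have s': "2*a + b' + a = 1" using s by (simp add: b'_def)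
  have e4: "a*sqrt a + H a b' \<le> 1/2" using E4[OF a0 b'0 a0 order_refl] s' by simp
  have apos: "a > 0" using False by simp
  have ab: "a + b > 0" using apos b0 by simp
  have ab': "a + b' > 0" using apos b'0 by simp
  have ab'e: "a + b' = 1 - 2*a" using s' by simp
  have asq: "a^2 \<ge> 113/500 * a"
  proof -
    have "a*a \<ge> 113/500 * a" using False apos by (intro mult_right_mono) auto
    then show ?thesis by (simp add: power2_eq_square)
  qed
  have a2: "(1-2*a)^2 \<le> 6*a^2"
  proof -
    have "6*a^2 - (1-2*a)^2 = 2*a^2 + 4*a - 1" by (simp add: power2_eq_square algebra_simps)
    then show ?thesis using False asq by linarith
  qed
  have X: "3*hm a b + d \<le> 3*hm a b'"
  proof -
    have "3*(a*b'/(a+b')) - 3*(a*b/(a+b)) = 6*a^2*d/((a+b)*(a+b'))"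
      using ab ab' by (simp add: b'_def field_simps) (simp add: power2_eq_square algebra_simps)
    then have "3*hm a b' - 3*hm a b = 6*a^2*d/((a+b)*(a+b'))"
      by (simp only: hm_pos[OF a0 b0 ab] hm_pos[OF a0 b'0 ab'])
    moreover have "d \<le> 6*a^2*d/((a+b)*(a+b'))"
    proof -
      have "(a+b)*(a+b') \<le> (1-2*a)*(1-2*a)" using ab ab'e b'_def d0 by (intro mult_mono) auto
      then have "(a+b)*(a+b') \<le> 6*a^2" using a2 by (simp add: power2_eq_square)
      then have "d*((a+b)*(a+b')) \<le> d*(6*a^2)" using d0 by (intro mult_left_mono) auto
      moreover have pos: "(a+b)*(a+b') > 0" using ab ab' by simp
      ultimately show ?thesis by (simp add: pos_le_divide_eq[OF pos] mult.commute)
    qed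
    ultimately show ?thesis by linarith
  qed
  have Y: "3*(a*sqrt b) + d \<le> 3*(a*sqrt b')"
  proof -
    have sbb: "sqrt b \<le> sqrt b'" using b'_def d0 by simp
    have "sqrt b' \<le> 3*a"
    proof -
      have "b' \<le> (3*a)^2"
      proof -
        have "(3*a)^2 - b' = 9*a^2 + 3*a - 1" using s' by (simp add: power2_eq_square algebra_simps)
        then show ?thesis using False asq by linarith
      qed
      then show ?thesis using sqrt_ub[of "3*a" b'] apos by simp
    qed
    then have "sqrt b' + sqrt b \<le> 6*a" using sbb by linarith
    then have "3*a*(sqrt b' - sqrt b)*(sqrt b' + sqrt b) \<le> 3*a*(sqrt b' - sqrt b)*(6*a)"
      using sbb apos by (intro mult_left_mono) auto
    moreover have "3*a*(sqrt b' - sqrt b)*(sqrt b' + sqrt b) = 6*a*d"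
    proof -
      have "(sqrt b' - sqrt b)*(sqrt b' + sqrt b) = b' - b" using b0 b'0 by (simp add: algebra_simps)
      then show ?thesis by (simp add: b'_def algebra_simps)
    qed
    ultimately have "6*a*d \<le> 6*a*(3*(a*sqrt b') - 3*(a*sqrt b))" by (simp add: algebra_simps)
    then show ?thesis using apos by simp
  qed
  have capb: "3*hm a b' < 93/200"
  proof -
    have "3*hm a b' \<le> 1287/2500*(2*a+b')" by (rule hm_bound[OF a0 b'0])
    moreover have "1287/2500*(2*a+b') = 1287/2500 - 1287/2500*a" using s' by (simp add: field_simps)
    ultimately show ?thesis using False by linarith
  qed
  have Hb': "H a b' = min (3*hm a b') (3*(a*sqrt b'))"
    using capb by (simp add: H_def min_def)
  have "H a b + d \<le> H a b'"
    using X Y H_hm[of a b] H_A[of a b] by (simp add: Hb' algebra_simps)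
  then show ?thesis using e4 by linarith
qed

lemma chord_lin:
  fixes x1 x x2 y1 y2 :: real
  assumes "0 \<le> x1" "x1 \<le> x" "x \<le> x2" "x1 < x2" "x1 * sqrt x1 \<le> y1" "x2 * sqrt x2 \<le> y2"
  shows "(x2 - x1) * (x * sqrt x) \<le> (x2*y1 - x1*y2) + (y2 - y1)*x"
  using chord_ub[OF assms] by (simp add: algebra_simps)

lemma E1:
  assumes a0: "a \<ge> 0" and b0: "b \<ge> 0" and d0: "d \<ge> 0" and s: "2*a+b+2*d = 1" and dm: "d \<le> 4/25"
  shows "2*(d*sqrt d) + d/5 + H a b \<le> 1/2"
proof -
  define Fd where "Fd = d * sqrt d"
  show ?thesis
  proof (cases "d \<le> 1/20")
    case True
    have "d*sqrt d \<le> d*(2237/10000)" using F_ub[OF d0, of "2237/10000"] True by (simp add: power2_eq_square)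
    then have "Fd \<le> d*(2237/10000)" by (simp add: Fd_def)
    then show ?thesis using H_cap[of a b] True d0 unfolding Fd_def[symmetric] by linarith
  next
    case False
    show ?thesis
    proof (cases "d \<le> 3/25")
      case True
      have c: "(3/25 - 1/20) * Fd \<le> (3/25*(1/20*(2237/10000)) - 1/20*(3/25*(34642/100000))) + (3/25*(34642/100000) - 1/20*(2237/10000))*d"
        unfolding Fd_def
        by (rule chord_lin) (use False True F_ub[of "1/20" "2237/10000"] F_ub[of "3/25" "34642/100000"] in \<open>auto simp: power2_eq_square\<close>)
      have h: "H a b \<le> 1287/2500 * (2*a+b)" using H_hm[of a b] hm_bound[OF a0 b0] by linarith
      have "2*a+b = 1 - 2*d" using s by simp
      then show ?thesis using c h False True unfolding Fd_def[symmetric] by simp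
    next
      case False2: False
      define x where "x = (2*a+b)/3"
      have x: "3*x = 1 - 2*d" using s by (simp add: x_def)
      define Fx where "Fx = x * sqrt x"
      have c1: "(4/25 - 3/25) * Fd \<le> (4/25*(3/25*(34642/100000)) - 3/25*(4/25*(2/5))) + (4/25*(2/5) - 3/25*(34642/100000))*d"
        unfolding Fd_def
        by (rule chord_lin) (use False2 dm F_ub[of "3/25" "34642/100000"] F_ub[of "4/25" "2/5"] in \<open>auto simp: power2_eq_square\<close>)
      have c2: "(19/75 - 17/75) * Fx \<le> (19/75*(17/75*(4761/10000)) - 17/75*(19/75*(50333/100000))) + (19/75*(50333/100000) - 17/75*(4761/10000))*x"
        unfolding Fx_def
        by (rule chord_lin) (use False2 dm x F_ub[of "17/75" "4761/10000"] F_ub[of "19/75" "50333/100000"] in \<open>auto simp: power2_eq_square\<close>)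
      have h: "H a b \<le> 3 * Fx" using H_A[of a b] amgm3[OF a0 b0] by (simp add: Fx_def x_def)
      show ?thesis using c1 c2 h x False2 dm unfolding Fd_def[symmetric] by simp
    qed
  qed
qed

lemma LP1:
  assumes a0: "a \<ge> 0" and b0: "b \<ge> 0" and c0: "c \<ge> 0" and ca: "c \<le> a" and s: "2*a+b+c \<le> 17/25"
  shows "c * sqrt c + 3 * (a * sqrt b) \<le> 33/100"
proof -
  define x where "x = (17/25 - c)/3"
  have x: "3*x = 17/25 - c" by (simp add: x_def)
  define Fx where "Fx = x * sqrt x"
  define Fc where "Fc = c * sqrt c"
  have cm: "c \<le> 17/75" using ca s b0 by linarith
  have "a * sqrt b \<le> ((2*a+b)/3) * sqrt ((2*a+b)/3)" by (rule amgm3[OF a0 b0])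
  also have "\<dots> \<le> Fx" unfolding Fx_def x_def using a0 b0 s by (intro F_mono) auto
  finally have h: "a * sqrt b \<le> Fx" .
  have c1: "(17/75 - 0) * Fc \<le> (17/75*0 - 0*(17/75*(4761/10000))) + (17/75*(4761/10000) - 0)*c"
    unfolding Fc_def
    by (rule chord_lin) (use c0 cm F_ub[of "17/75" "4761/10000"] in \<open>auto simp: power2_eq_square\<close>)
  have c2: "(17/75 - 34/225) * Fx \<le> (17/75*(34/225*(38874/100000)) - 34/225*(17/75*(4761/10000))) + (17/75*(4761/10000) - 34/225*(38874/100000))*x"
    unfolding Fx_def
    by (rule chord_lin) (use c0 cm x_def F_ub[of "34/225" "38874/100000"] F_ub[of "17/75" "4761/10000"] in \<open>auto simp: power2_eq_square\<close>)
  show ?thesis using h c1 c2 c0 cm x unfolding Fc_def[symmetric] by simp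
qed

lemma sqrt_4_25: "sqrt (4/25) = (2/5::real)"
  by (rule real_sqrt_unique) (simp_all add: power2_eq_square)

lemma MAIN:
  assumes a0: "a \<ge> 0" and b0: "b \<ge> 0" and c0: "c \<ge> 0" and d0: "d \<ge> 0" and ca: "c \<le> a"
    and s: "2*a+b+c+2*d = 1" and dm: "d \<le> 4/25"
  shows "c*sqrt c + 2*(d*sqrt d) + d/5 + H a b \<le> 1/2"
proof -
  define u where "u = c + 2*d"
  define phi where "phi = (\<lambda>x. x*sqrt x + 2*(((u-x)/2)*sqrt((u-x)/2)) + (u-x)/10)"
  define l where "l = max 0 (u - 8/25)"
  define r where "r = min a u"
  have lc: "l \<le> c" using c0 dm by (simp add: l_def u_def)
  have cr: "c \<le> r" using ca d0 by (simp add: r_def u_def)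
  have l0: "0 \<le> l" by (simp add: l_def)
  have ru: "r \<le> u" by (simp add: r_def)
  have phic: "phi c = c*sqrt c + 2*(d*sqrt d) + d/5" by (simp add: phi_def u_def)
  define Hv where "Hv = H a b"
  have EL: "phi l + Hv \<le> 1/2"
  proof (cases "u \<le> 8/25")
    case True
    then have "l = 0" by (simp add: l_def)
    have u1: "u/2 \<ge> 0" using c0 d0 by (simp add: u_def)
    have u2: "2*a+b+2*(u/2) = 1" using s by (simp add: u_def field_simps)
    have u3: "u/2 \<le> 4/25" using True by simp
    have "2*((u/2)*sqrt (u/2)) + (u/2)/5 + H a b \<le> 1/2"
      using E1[OF a0 b0 u1 u2 u3] .
    then show ?thesis by (simp add: \<open>l = 0\<close> phi_def Hv_def)
  next
    case False
    then have ll: "l = u - 8/25" by (simp add: l_def)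
    have "(u - l)/2 = 4/25" by (simp add: ll)
    then have pl: "phi l = l*sqrt l + 4/25" by (simp add: phi_def sqrt_4_25 ll)
    have "l*sqrt l + 3*(a*sqrt b) \<le> 33/100"
      using LP1[OF a0 b0 l0] lc ca s by (simp add: ll u_def)
    then show ?thesis using pl H_A[of a b] by (simp add: Hv_def)
  qed
  have ER: "phi r + Hv \<le> 1/2"
  proof (cases "a \<le> u")
    case True
    then have rr: "r = a" by (simp add: r_def)
    define d' where "d' = (u-a)/2"
    have d'0: "d' \<ge> 0" using True by (simp add: d'_def)
    have d'm: "d' \<le> 4/25" using ca dm by (simp add: d'_def u_def)
    have "d' * sqrt d' \<le> d' * (2/5)" using F_ub[OF d'0, of "2/5"] d'm by (simp add: power2_eq_square)
    moreover have "phi r = a*sqrt a + 2*(d'*sqrt d') + d'/5" by (simp add: phi_def rr d'_def)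
    moreover have "3*a+b+2*d' = 1" using s by (simp add: d'_def u_def field_simps)
    then have "a*sqrt a + d' + H a b \<le> 1/2" using E3[OF a0 b0 d'0] by simp
    ultimately show ?thesis by (simp add: Hv_def)
  next
    case False
    then have rr: "r = u" by (simp add: r_def)
    have u0: "u \<ge> 0" using c0 d0 by (simp add: u_def)
    have "2*a+b+u = 1" using s by (simp add: u_def)
    then have "u*sqrt u + H a b \<le> 1/2" using E4[OF a0 b0 u0] False by simp
    then show ?thesis by (simp add: phi_def rr Hv_def)
  qed
  define Fc where "Fc = c*sqrt c"
  define Fl where "Fl = l*sqrt l"
  define Fr where "Fr = r*sqrt r"
  define Gc where "Gc = ((u-c)/2)*sqrt((u-c)/2)"
  define Gl where "Gl = ((u-l)/2)*sqrt((u-l)/2)"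
  define Gr where "Gr = ((u-r)/2)*sqrt((u-r)/2)"
  have A1: "(r-l)*Fc \<le> (r-c)*Fl + (c-l)*Fr"
    unfolding Fc_def Fl_def Fr_def using chord[OF l0 lc cr] .
  have A2: "(r-l)*Gc \<le> (c-l)*Gr + (r-c)*Gl"
  proof -
    have y0: "0 \<le> (u-r)/2" using ru by simp
    have "((u-l)/2 - (u-r)/2) * Gc \<le> ((u-l)/2 - (u-c)/2) * Gr + ((u-c)/2 - (u-r)/2) * Gl"
      unfolding Gc_def Gl_def Gr_def by (rule chord[OF y0]) (use lc cr in auto)
    moreover have "(u-l)/2 - (u-r)/2 = (r-l)/2" "(u-l)/2 - (u-c)/2 = (c-l)/2" "(u-c)/2 - (u-r)/2 = (r-c)/2"
      by (simp_all add: field_simps)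
    ultimately have "(r-l)/2 * Gc \<le> (c-l)/2 * Gr + (r-c)/2 * Gl" by simp
    then show ?thesis by (simp add: field_simps)
  qed
  have PL: "phi l + Hv = Fl + 2*Gl + (u-l)/10 + Hv" by (simp add: phi_def Fl_def Gl_def)
  have PR: "phi r + Hv = Fr + 2*Gr + (u-r)/10 + Hv" by (simp add: phi_def Fr_def Gr_def)
  have PC: "phi c + Hv = Fc + 2*Gc + (u-c)/10 + Hv" by (simp add: phi_def Fc_def Gc_def)
  have B1: "(r-c)*(phi l + Hv) \<le> (r-c)*(1/2)" using EL cr by (intro mult_left_mono) auto
  have B2: "(c-l)*(phi r + Hv) \<le> (c-l)*(1/2)" using ER lc by (intro mult_left_mono) auto
  have e: "(r-l)*(phi c + Hv) = ((r-l)*Fc - (r-c)*Fl - (c-l)*Fr) + 2*((r-l)*Gc) - 2*((c-l)*Gr) - 2*((r-c)*Gl)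
            + (r-c)*(phi l + Hv) + (c-l)*(phi r + Hv)"
    unfolding PL PR PC by (simp add: field_simps)
  have e2: "(r-c)*(1/2) + (c-l)*(1/2) = (r-l)*(1/2::real)" by (simp add: field_simps)
  have fin: "(r-l)*(phi c + Hv) \<le> (r-l)*(1/2)"
    using e e2 A1 A2 B1 B2 by linarith
  have "phi c + Hv \<le> 1/2"
  proof (cases "l < r")
    case True
    then show ?thesis using fin by simp
  next
    case False
    then have "c = l" using lc cr by simp
    then show ?thesis using EL by simp
  qed
  then show ?thesis using phic by (simp add: Hv_def)
qed

lemma g_point: "g (1/4) (1/4) (1/4) = 1/2"
proof -
  have s: "sqrt (1/4) = (1/2::real)" by (rule real_sqrt_unique) (simp_all add: power2_eq_square)
  have "hm (1/4) (1/4) = 1/8" by (simp add: hm_def)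
  then have "H (1/4) (1/4) = 3/8" by (simp add: H_def s)
  then show ?thesis by (simp add: g_H s)
qed

theorem lemma5p6:
  fixes a b c d :: real
  assumes "a \<ge> 0" "b \<ge> 0" "c \<ge> 0" "d \<ge> 0"
    and "2 * a + b + c + 2 * d = 1"
    and "c \<le> a"
  shows "f a b c d \<le> 1/2 \<and> (f a b c d = 1/2 \<longleftrightarrow> (a, b, c, d) = (1/4, 1/4, 1/4, 0))"
proof -
  note a0 = assms(1) and b0 = assms(2) and c0 = assms(3) and d0 = assms(4) and s = assms(5) and ca = assms(6)
  have gH: "g a b c = c*sqrt c + H a b" using g_H[OF c0] .
  have fdef: "f a b c d = min (2*(d*sqrt d) + g a b c) (1/4 + 3/4 * g a b c)"
    by (simp add: f_def powr32[OF d0])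
  show ?thesis
  proof (cases "d > 4/25")
    case True
    have "c*sqrt c + 3*(a*sqrt b) \<le> 33/100" using LP1[OF a0 b0 c0 ca] s True by simp
    then have "g a b c \<le> 33/100" using gH H_A[of a b] by simp
    moreover have "f a b c d \<le> 1/4 + 3/4 * g a b c" using fdef by simp
    ultimately have "f a b c d < 1/2" by linarith
    moreover have "(a, b, c, d) \<noteq> (1/4, 1/4, 1/4, 0)" using True by auto
    ultimately show ?thesis by simp
  next
    case False
    then have dm: "d \<le> 4/25" by simp
    have M: "c*sqrt c + 2*(d*sqrt d) + d/5 + H a b \<le> 1/2" using MAIN[OF a0 b0 c0 d0 ca s dm] .
    have fX: "f a b c d \<le> 2*(d*sqrt d) + g a b c" using fdef by simp
    show ?thesis
    proof (cases "d = 0")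
      case False
      then have "f a b c d < 1/2" using fX M gH d0 by simp
      moreover have "(a, b, c, d) \<noteq> (1/4, 1/4, 1/4, 0)" using False by auto
      ultimately show ?thesis by simp
    next
      case True
      have s1: "2*a+b+c = 1" using s True by simp
      have E: "c*sqrt c + H a b \<le> 1/2 \<and> ((a = 1/4 \<and> b = 1/4 \<and> c = 1/4) \<or> c*sqrt c + H a b < 1/2)"
        using E4[OF a0 b0 c0 ca s1] .
      show ?thesis
      proof (cases "a = 1/4 \<and> b = 1/4 \<and> c = 1/4")
        case True
        then have "g a b c = 1/2" using g_point by (simp only:)
        then have fa: "f a b c d = 1/2" using fdef \<open>d = 0\<close> by simp
        have pt: "(a, b, c, d) = (1/4, 1/4, 1/4, 0)" using True \<open>d = 0\<close> by simp
        show ?thesis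
        proof (intro conjI iffI)
          show "f a b c d \<le> 1/2" using fa by linarith
          show "(a, b, c, d) = (1/4, 1/4, 1/4, 0)" using pt .
          show "f a b c d = 1/2" using fa .
        qed
      next
        case False
        then have "c*sqrt c + H a b < 1/2" using E by blast
        then have "g a b c < 1/2" using gH by simp
        then have "f a b c d < 1/2" using fX \<open>d = 0\<close> by simp
        moreover have "(a, b, c, d) \<noteq> (1/4, 1/4, 1/4, 0)" using False by auto
        ultimately show ?thesis by simp
      qed
    qed
  qed
qed

end
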